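(* Let $p,q$ be CFM processes with $p \approx^\oplus q$. If $p$ satisfies DNI, then $q$ satisfies DNI.
   Context: Fix a finite set of actions $Act = H \cup L \cup \{\tau\}$, where $H$ (high-level actions) and $L$ (low-level actions) are disjoint and $\tau$ is the silent action; $\mu$ ranges over $Act$, $h$ over $H$. Fix a finite set of process constants disjoint from $Act$. CFM terms: guarded $s ::= \mathbf{0} \mid \mu.q \mid s+s$; sequential $q ::= s \mid C$; parallel $p ::= q \mid p \,|\, p$. A CFM process is a term all of whose constants have a defining equation $C \doteq s$ with $s$ guarded. LTS rules: $\mu.p \xrightarrow{\mu} p$; if $p \xrightarrow{\mu} p'$ and $C \doteq p$ then $C \xrightarrow{\mu} p'$; if $p \xrightarrow{\mu} p'$ then $p+q \xrightarrow{\mu} p'$ and $q+p \xrightarrow{\mu} p'$; if $p \xrightarrow{\mu} p'$ then $p\,|\,q \xrightarrow{\mu} p'\,|\,q$ and $q\,|\,p \xrightarrow{\mu} q\,|\,p'$. Reachability is in this LTS. An FSM is $N=(S,A,T)$ with finite places $S$, finite labels $A\ni\tau$, and $T \subseteq S \times A \times (S \cup \{\theta\})$ ($\theta$ the empty multiset). Markings are finite multisets over $S$; a transition $(s,\ell,m)$ is enabled at $m_1$ if $s\in m_1$ and firing gives $m_1 \xrightarrow{\ell} (m_1\ominus s)\oplus m$. Net semantics: places are sequential CFM processes other than $\mathbf{0}$; $\mathrm{dec}(\mathbf{0})=\theta$, $\mathrm{dec}(\mu.p)=\{\mu.p\}$, $\mathrm{dec}(p+p')=\{p+p'\}$, $\mathrm{dec}(C)=\{C\}$,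 $\mathrm{dec}(p\,|\,p')=\mathrm{dec}(p)\oplus\mathrm{dec}(p')$. The net $[\![p]\!]$ has initial marking $\mathrm{dec}(p)$, all places and transitions reachable from it, and transitions $(s,\mu,\mathrm{dec}(s'))$ for reachable places $s$ with $s\xrightarrow{\mu}s'$ in the LTS. The net $[\![p\setminus H]\!]$ is obtained by renaming each place $s$ as $s\setminus H$, removing transitions labelled in $H$, and taking initial marking $\mathrm{dec}(p)\setminus H$ (elementwise renaming; similarly $m\setminus H$ for any marking $m$). Branching bisimilarity $\approx$ on places of an FSM: $s\Rightarrow^\epsilon m$ is the reflexive-transitive closure of $\tau$-steps. $R\subseteq S\times S$ is a branching bisimulation if whenever $(s_1,s_2)\in R$ and $s_1\xrightarrow{\ell}m_1$: either $\ell=\tau$ and $\exists m_2$, $s_2\Rightarrow^\epsilon m_2$ with $(s_1,m_2),(m_1,m_2)\in R$; or $\exists s,m_2$ with $s_2\Rightarrow^\epsilon s\xrightarrow{\ell}m_2$, $(s_1,s)\in R$ and either $m_1=\theta=m_2$ or $(m_1,m_2)\in R$; and symmetrically. $\approx$ is the union of all branching bisimulations. The additive closure $R^\oplus$ is the least marking relation with $(\theta,\theta)\in R^\oplus$ and closed under $(s_1,s_2)\in R,(m_1,m_2)\in R^\oplus \Rightarrow (s_1\oplus m_1,s_2\oplus m_2)\in R^\oplus$. Branching team equivalence is $\approx^\oplus$; for processes, $p\approx^\oplus q$ iff $\mathrm{dec}(p)\approx^\oplus\mathrm{dec}(q)$ in the union of the nets $[\![p]\!]$ and $[\![q]\!]$,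 and $p'\setminus H\approx^\oplus p''\setminus H$ iff $\mathrm{dec}(p')\setminus H\approx^\oplus\mathrm{dec}(p'')\setminus H$ in the union of their restricted nets. DNI: a CFM process $p$ satisfies DNI if for all $p',p''$ reachable from $p$ and $h\in H$ with $p'\xrightarrow{h}p''$, $p'\setminus H\approx^\oplus p''\setminus H$; equivalently, for all markings $m_1,m_2$ reachable from $\mathrm{dec}(p)$ in $[\![p]\!]$ and $h\in H$ with $m_1\xrightarrow{h}m_2$, $m_1\setminus H \approx^\oplus m_2\setminus H$ in $[\![p\setminus H]\!]$. *)

theory Defs
  imports Main "HOL-Library.Multiset"
begin

text \<open>Finiteness of Act and of the set of constants is imposed via the sort finite in the theorem.\<close>

datatype 'a act = Tau | Vis 'a

definition is_high :: "'a set \<Rightarrow> 'a act \<Rightarrow> bool" where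
  "is_high H \<mu> \<longleftrightarrow> (\<exists>h\<in>H. \<mu> = Vis h)"

datatype ('a, 'c) cfm =
    CNil
  | Pre "'a act" "('a, 'c) cfm"
  | Sum "('a, 'c) cfm" "('a, 'c) cfm"
  | Cst 'c
  | Par "('a, 'c) cfm" "('a, 'c) cfm"

inductive guarded :: "('a, 'c) cfm \<Rightarrow> bool"
  and sequential :: "('a, 'c) cfm \<Rightarrow> bool" where
  g_nil: "guarded CNil"
| g_pre: "sequential q \<Longrightarrow> guarded (Pre \<mu> q)"
| g_sum: "guarded s1 \<Longrightarrow> guarded s2 \<Longrightarrow> guarded (Sum s1 s2)"
| s_guarded: "guarded s \<Longrightarrow> sequential s"
| s_cst: "sequential (Cst C)"

inductive parallel :: "('a, 'c) cfm \<Rightarrow> bool" where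
  p_seq: "sequential q \<Longrightarrow> parallel q"
| p_par: "parallel p1 \<Longrightarrow> parallel p2 \<Longrightarrow> parallel (Par p1 p2)"

text \<open>A defining environment gives each constant C its body (C \<doteq> Delta C); it is well formed
  if every body is a guarded term. A CFM process (w.r.t. a well formed environment) is a
  parallel term.\<close>

definition wf_env :: "('c \<Rightarrow> ('a, 'c) cfm) \<Rightarrow> bool" where
  "wf_env \<Delta> \<longleftrightarrow> (\<forall>C. guarded (\<Delta> C))"

definition cfm_process :: "('c \<Rightarrow> ('a, 'c) cfm) \<Rightarrow> ('a, 'c) cfm \<Rightarrow> bool" where
  "cfm_process \<Delta> p \<longleftrightarrow> wf_env \<Delta> \<and> parallel p"

inductive step :: "('c \<Rightarrow> ('a, 'c) cfm) \<Rightarrow> ('a, 'c) cfm \<Rightarrow> 'a act \<Rightarrow> ('a, 'c) cfm \<Rightarrow> bool"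
  for \<Delta> where
  st_pre: "step \<Delta> (Pre \<mu> p) \<mu> p"
| st_cst: "step \<Delta> (\<Delta> C) \<mu> p' \<Longrightarrow> step \<Delta> (Cst C) \<mu> p'"
| st_suml: "step \<Delta> p \<mu> p' \<Longrightarrow> step \<Delta> (Sum p q) \<mu> p'"
| st_sumr: "step \<Delta> p \<mu> p' \<Longrightarrow> step \<Delta> (Sum q p) \<mu> p'"
| st_parl: "step \<Delta> p \<mu> p' \<Longrightarrow> step \<Delta> (Par p q) \<mu> (Par p' q)"
| st_parr: "step \<Delta> p \<mu> p' \<Longrightarrow> step \<Delta> (Par q p) \<mu> (Par q p')"

inductive reach :: "('c \<Rightarrow> ('a, 'c) cfm) \<Rightarrow> ('a, 'c) cfm \<Rightarrow> ('a, 'c) cfm \<Rightarrow> bool"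
  for \<Delta> where
  reach_refl: "reach \<Delta> p p"
| reach_step: "reach \<Delta> p p' \<Longrightarrow> step \<Delta> p' \<mu> p'' \<Longrightarrow> reach \<Delta> p p''"

text \<open>An FSM is given by a set of places S and a set of transitions T; a transition is
  (s, l, m) where m is either the empty multiset (theta) or a singleton multiset.
  The label tau is passed explicitly.\<close>

inductive tau_star :: "'l \<Rightarrow> ('s \<times> 'l \<times> 's multiset) set \<Rightarrow> 's multiset \<Rightarrow> 's multiset \<Rightarrow> bool"
  for tau T where
  ts_refl: "tau_star tau T m m"
| ts_step: "(s, tau, m') \<in> T \<Longrightarrow> tau_star tau T m' m'' \<Longrightarrow> tau_star tau T {#s#} m''"

definition bb_clause :: "'l \<Rightarrow> ('s \<times> 'l \<times> 's multiset) set \<Rightarrow> ('s \<times> 's) set \<Rightarrow> 's \<Rightarrow> 's \<Rightarrow> bool" where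
  "bb_clause tau T R s1 s2 \<longleftrightarrow>
     (\<forall>l m1. (s1, l, m1) \<in> T \<longrightarrow>
        (l = tau \<and> (\<exists>m2. tau_star tau T {#s2#} {#m2#} \<and> (s1, m2) \<in> R
                         \<and> (\<exists>m1'. m1 = {#m1'#} \<and> (m1', m2) \<in> R)))
      \<or> (\<exists>s m2. tau_star tau T {#s2#} {#s#} \<and> (s, l, m2) \<in> T \<and> (s1, s) \<in> R
                 \<and> ((m1 = {#} \<and> m2 = {#}) \<or>
                    (\<exists>m1' m2'. m1 = {#m1'#} \<and> m2 = {#m2'#} \<and> (m1', m2') \<in> R))))"

definition branching_bisimulation ::
  "'l \<Rightarrow> 's set \<Rightarrow> ('s \<times> 'l \<times> 's multiset) set \<Rightarrow> ('s \<times> 's) set \<Rightarrow> bool" where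
  "branching_bisimulation tau S T R \<longleftrightarrow>
     R \<subseteq> S \<times> S \<and>
     (\<forall>s1 s2. (s1, s2) \<in> R \<longrightarrow> bb_clause tau T R s1 s2 \<and> bb_clause tau T (R\<inverse>) s2 s1)"

definition branching_bisimilarity ::
  "'l \<Rightarrow> 's set \<Rightarrow> ('s \<times> 'l \<times> 's multiset) set \<Rightarrow> ('s \<times> 's) set" where
  "branching_bisimilarity tau S T = \<Union>{R. branching_bisimulation tau S T R}"

inductive_set additive_closure :: "('s \<times> 's) set \<Rightarrow> ('s multiset \<times> 's multiset) set"
  for R where
  ac_empty: "({#}, {#}) \<in> additive_closure R"
| ac_add: "(s1, s2) \<in> R \<Longrightarrow> (m1, m2) \<in> additive_closure R \<Longrightarrow>
           (add_mset s1 m1, add_mset s2 m2) \<in> additive_closure R"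

definition team_equiv ::
  "'l \<Rightarrow> 's set \<Rightarrow> ('s \<times> 'l \<times> 's multiset) set \<Rightarrow> 's multiset \<Rightarrow> 's multiset \<Rightarrow> bool" where
  "team_equiv tau S T m1 m2 \<longleftrightarrow> (m1, m2) \<in> additive_closure (branching_bisimilarity tau S T)"

fun dec :: "('a, 'c) cfm \<Rightarrow> ('a, 'c) cfm multiset" where
  "dec CNil = {#}"
| "dec (Pre \<mu> p) = {#Pre \<mu> p#}"
| "dec (Sum p p') = {#Sum p p'#}"
| "dec (Cst C) = {#Cst C#}"
| "dec (Par p p') = dec p + dec p'"

inductive_set net_places :: "('c \<Rightarrow> ('a, 'c) cfm) \<Rightarrow> ('a, 'c) cfm \<Rightarrow> ('a, 'c) cfm set"
  for \<Delta> p where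
  np_init: "s \<in># dec p \<Longrightarrow> s \<in> net_places \<Delta> p"
| np_step: "s \<in> net_places \<Delta> p \<Longrightarrow> step \<Delta> s \<mu> s' \<Longrightarrow> s'' \<in># dec s' \<Longrightarrow> s'' \<in> net_places \<Delta> p"

definition net_trans ::
  "('c \<Rightarrow> ('a, 'c) cfm) \<Rightarrow> ('a, 'c) cfm \<Rightarrow> (('a, 'c) cfm \<times> 'a act \<times> ('a, 'c) cfm multiset) set" where
  "net_trans \<Delta> p = {(s, \<mu>, dec s') | s \<mu> s'. s \<in> net_places \<Delta> p \<and> step \<Delta> s \<mu> s'}"

text \<open>Restricted net: each place s is renamed into s\H (written Restr s), and transitions
  labelled by high actions are removed.\<close>

datatype 'x restr = Restr 'x

definition restr_places :: "'x set \<Rightarrow> 'x restr set" where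
  "restr_places S = Restr ` S"

definition restr_trans :: "'a set \<Rightarrow> ('x \<times> 'a act \<times> 'x multiset) set \<Rightarrow>
    ('x restr \<times> 'a act \<times> 'x restr multiset) set" where
  "restr_trans H T = {(Restr s, \<mu>, image_mset Restr m) | s \<mu> m. (s, \<mu>, m) \<in> T \<and> \<not> is_high H \<mu>}"

definition proc_team_equiv :: "('c \<Rightarrow> ('a, 'c) cfm) \<Rightarrow> ('a, 'c) cfm \<Rightarrow> ('a, 'c) cfm \<Rightarrow> bool" where
  "proc_team_equiv \<Delta> p q \<longleftrightarrow>
     team_equiv Tau (net_places \<Delta> p \<union> net_places \<Delta> q) (net_trans \<Delta> p \<union> net_trans \<Delta> q)
       (dec p) (dec q)"

definition restr_team_equiv ::
  "('c \<Rightarrow> ('a, 'c) cfm) \<Rightarrow> 'a set \<Rightarrow> ('a, 'c) cfm \<Rightarrow> ('a, 'c) cfm \<Rightarrow> bool" where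
  "restr_team_equiv \<Delta> H p' p'' \<longleftrightarrow>
     team_equiv Tau
       (restr_places (net_places \<Delta> p') \<union> restr_places (net_places \<Delta> p''))
       (restr_trans H (net_trans \<Delta> p') \<union> restr_trans H (net_trans \<Delta> p''))
       (image_mset Restr (dec p')) (image_mset Restr (dec p''))"

definition DNI :: "('c \<Rightarrow> ('a, 'c) cfm) \<Rightarrow> 'a set \<Rightarrow> ('a, 'c) cfm \<Rightarrow> bool" where
  "DNI \<Delta> H p \<longleftrightarrow>
     (\<forall>p' p'' h. reach \<Delta> p p' \<and> reach \<Delta> p p'' \<and> h \<in> H \<and> step \<Delta> p' (Vis h) p''
        \<longrightarrow> restr_team_equiv \<Delta> H p' p'')"

end

theory Submission
  imports Defs
begin

lemma ts_cases: "tau_star tau T m m' \<Longrightarrow> m' = m \<or> (\<exists>s. m = {#s#})"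
  by (induct rule: tau_star.induct) auto

lemma ts_trans: "tau_star tau T m1 m2 \<Longrightarrow> tau_star tau T m2 m3 \<Longrightarrow> tau_star tau T m1 m3"
  by (induct rule: tau_star.induct) (auto intro: tau_star.intros)

lemma ts_one: "(s, tau, m) \<in> T \<Longrightarrow> tau_star tau T {#s#} m"
  by (auto intro: tau_star.intros)

lemma bb_right:
  assumes "tau_star tau T {#b#} {#s#}" "(s,l,m2) \<in> T" "(a,s) \<in> R"
    "m1 = {#} \<and> m2 = {#} \<or> (\<exists>x y. m1 = {#x#} \<and> m2 = {#y#} \<and> (x,y) \<in> R)"
  shows "l = tau \<and> (\<exists>m2. tau_star tau T {#b#} {#m2#} \<and> (a, m2) \<in> R \<and> (\<exists>m1'. m1 = {#m1'#} \<and> (m1', m2) \<in> R)) \<or>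
         (\<exists>s m2. tau_star tau T {#b#} {#s#} \<and> (s, l, m2) \<in> T \<and> (a, s) \<in> R \<and>
             (m1 = {#} \<and> m2 = {#} \<or> (\<exists>m1' m2'. m1 = {#m1'#} \<and> m2 = {#m2'#} \<and> (m1', m2') \<in> R)))"
  by (rule disjI2, rule exI[of _ s], rule exI[of _ m2], intro conjI, rule assms(1), rule assms(2), rule assms(3), rule assms(4))

lemma bb_left:
  assumes "l = tau" "tau_star tau T {#b#} {#m2#}" "(a,m2) \<in> R" "m1 = {#x#}" "(x,m2) \<in> R"
  shows "l = tau \<and> (\<exists>m2. tau_star tau T {#b#} {#m2#} \<and> (a, m2) \<in> R \<and> (\<exists>m1'. m1 = {#m1'#} \<and> (m1', m2) \<in> R)) \<or>
         (\<exists>s m2. tau_star tau T {#b#} {#s#} \<and> (s, l, m2) \<in> T \<and> (a, s) \<in> R \<and>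
             (m1 = {#} \<and> m2 = {#} \<or> (\<exists>m1' m2'. m1 = {#m1'#} \<and> m2 = {#m2'#} \<and> (m1', m2') \<in> R)))"
  by (rule disjI1, intro conjI, rule assms(1), rule exI[of _ m2], intro conjI, rule assms(2), rule assms(3), rule exI[of _ x], intro conjI, rule assms(4), rule assms(5))

lemma D_mono: "m1 = {#} \<and> m2 = {#} \<or> (\<exists>x y. m1 = {#x#} \<and> m2 = {#y#} \<and> (x,y) \<in> R) \<Longrightarrow> R \<subseteq> R'
  \<Longrightarrow> m1 = {#} \<and> m2 = {#} \<or> (\<exists>x y. m1 = {#x#} \<and> m2 = {#y#} \<and> (x,y) \<in> R')"
  by blast

lemma bb_mono:
  assumes c: "bb_clause tau T R a b" and sub: "R \<subseteq> R'"
  shows "bb_clause tau T R' a b"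
  unfolding bb_clause_def
proof (intro allI impI)
  fix l m1 assume tr: "(a, l, m1) \<in> T"
  note XX = c[unfolded bb_clause_def, rule_format, OF tr]
  show "l = tau \<and> (\<exists>m2. tau_star tau T {#b#} {#m2#} \<and> (a, m2) \<in> R' \<and> (\<exists>m1'. m1 = {#m1'#} \<and> (m1', m2) \<in> R')) \<or>
         (\<exists>s m2. tau_star tau T {#b#} {#s#} \<and> (s, l, m2) \<in> T \<and> (a, s) \<in> R' \<and>
             (m1 = {#} \<and> m2 = {#} \<or> (\<exists>m1' m2'. m1 = {#m1'#} \<and> m2 = {#m2'#} \<and> (m1', m2') \<in> R')))"
  proof (rule disjE[OF XX]; elim exE conjE)
    fix m2 m1' assume A: "l = tau" "tau_star tau T {#b#} {#m2#}" "(a, m2) \<in> R" "m1 = {#m1'#}" "(m1', m2) \<in> R"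
    show ?thesis by (rule bb_left[OF A(1) A(2) subsetD[OF sub A(3)] A(4) subsetD[OF sub A(5)]])
  next
    fix s m2 assume B: "tau_star tau T {#b#} {#s#}" "(s, l, m2) \<in> T" "(a, s) \<in> R"
      "m1 = {#} \<and> m2 = {#} \<or> (\<exists>m1' m2'. m1 = {#m1'#} \<and> m2 = {#m2'#} \<and> (m1', m2') \<in> R)"
    show ?thesis by (rule bb_right[OF B(1) B(2) subsetD[OF sub B(3)] D_mono[OF B(4) sub]])
  qed
qed

lemma bisim_UNIV: "branching_bisimulation tau UNIV T R \<longleftrightarrow>
   (\<forall>a b. (a,b)\<in>R \<longrightarrow> bb_clause tau T R a b \<and> bb_clause tau T (R\<inverse>) b a)"
  by (auto simp: branching_bisimulation_def)

abbreviation gB where "gB tau T \<equiv> branching_bisimilarity tau UNIV T"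

lemma gB_bisim: "branching_bisimulation tau UNIV T (gB tau T)"
  unfolding bisim_UNIV
proof (intro allI impI)
  fix a b assume "(a,b) \<in> gB tau T"
  then obtain R where R: "branching_bisimulation tau UNIV T R" "(a,b) \<in> R"
    by (auto simp: branching_bisimilarity_def)
  have sub: "R \<subseteq> gB tau T" using R(1) by (auto simp: branching_bisimilarity_def)
  hence sub': "R\<inverse> \<subseteq> (gB tau T)\<inverse>" by auto
  from R have cc: "bb_clause tau T R a b" "bb_clause tau T (R\<inverse>) b a" by (auto simp: bisim_UNIV)
  show "bb_clause tau T (gB tau T) a b \<and> bb_clause tau T ((gB tau T)\<inverse>) b a"
    by (rule conjI[OF bb_mono[OF cc(1) sub] bb_mono[OF cc(2) sub']])
qed

lemma bisim_in_gB: "branching_bisimulation tau UNIV T R \<Longrightarrow> R \<subseteq> gB tau T"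
  unfolding branching_bisimilarity_def by blast

lemma bisim_conv: "branching_bisimulation tau UNIV T R \<Longrightarrow> branching_bisimulation tau UNIV T (R\<inverse>)"
  unfolding bisim_UNIV converse_iff converse_converse by blast

lemma gB_sym: "(a,b) \<in> gB tau T \<Longrightarrow> (b,a) \<in> gB tau T"
  by (rule subsetD[OF bisim_in_gB[OF bisim_conv[OF gB_bisim[of tau T]]]], rule converseI)

definition half where "half tau T R \<longleftrightarrow> (\<forall>a b. (a,b) \<in> R \<longrightarrow> bb_clause tau T R a b)"

lemma half_D: "half tau T R \<Longrightarrow> (a,b) \<in> R \<Longrightarrow> bb_clause tau T R a b"
  unfolding half_def by blast

lemma bisim_half: "branching_bisimulation tau UNIV T R \<Longrightarrow> half tau T R \<and> half tau T (R\<inverse>)"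
  unfolding bisim_UNIV half_def converse_iff by blast

lemma tau_match:
  assumes c: "bb_clause tau T R p q" and tr: "(p, tau, {#x#}) \<in> T"
  shows "\<exists>y. tau_star tau T {#q#} {#y#} \<and> (x,y) \<in> R"
proof -
  note XX = c[unfolded bb_clause_def, rule_format, OF tr]
  show ?thesis
  proof (rule disjE[OF XX]; elim exE conjE)
    fix m2 m1' assume A: "tau_star tau T {#q#} {#m2#}" "{#x#} = {#m1'#}" "(m1', m2) \<in> R"
    have "x = m1'" using A(2) by simp
    thus ?thesis using A(1) A(3) by blast
  next
    fix s m2 assume B: "tau_star tau T {#q#} {#s#}" "(s, tau, m2) \<in> T"
      "{#x#} = {#} \<and> m2 = {#} \<or> (\<exists>m1' m2'. {#x#} = {#m1'#} \<and> m2 = {#m2'#} \<and> (m1', m2') \<in> R)"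
    obtain y where y: "m2 = {#y#}" "(x,y) \<in> R"
    proof (rule disjE[OF B(3)])
      assume "{#x#} = {#} \<and> m2 = {#}" thus ?thesis by simp
    next
      assume "\<exists>m1' m2'. {#x#} = {#m1'#} \<and> m2 = {#m2'#} \<and> (m1', m2') \<in> R"
      then obtain a b where ab: "{#x#} = {#a#}" "m2 = {#b#}" "(a,b) \<in> R" by blast
      have "a = x" using ab(1) by simp
      thus ?thesis using that ab(2,3) by blast
    qed
    have "tau_star tau T {#q#} {#y#}" using ts_trans[OF B(1) ts_one] B(2) y(1) by blast
    thus ?thesis using y(2) by blast
  qed
qed

lemma weak_transfer_aux:
  "tau_star tau T m m' \<Longrightarrow> m = {#p#} \<Longrightarrow> m' = {#p'#} \<Longrightarrow> (p,q) \<in> R \<Longrightarrow> half tau T R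
   \<Longrightarrow> \<exists>q'. tau_star tau T {#q#} {#q'#} \<and> (p',q') \<in> R"
proof (induct arbitrary: p q rule: tau_star.induct)
  case (ts_refl m)
  then show ?case by (auto intro: tau_star.intros)
next
  case (ts_step s m' m'')
  have sp: "s = p" using ts_step by simp
  obtain x where x: "m' = {#x#}" using ts_cases[OF ts_step(2)] ts_step(5) by auto
  have bbc: "bb_clause tau T R p q" using half_D[OF ts_step(7) ts_step(6)] .
  have tr: "(p, tau, {#x#}) \<in> T" using ts_step(1) sp x by simp
  obtain y where y: "tau_star tau T {#q#} {#y#}" "(x,y) \<in> R"
    using tau_match[OF bbc tr] by blast
  from ts_step(3)[OF x ts_step(5) y(2) ts_step(7)] obtain q' where
    "tau_star tau T {#y#} {#q'#}" "(p',q') \<in> R" by auto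
  thus ?case using ts_trans[OF y(1)] by blast
qed

lemma weak_transfer:
  "tau_star tau T {#p#} {#p'#} \<Longrightarrow> (p,q) \<in> R \<Longrightarrow> half tau T R
   \<Longrightarrow> \<exists>q'. tau_star tau T {#q#} {#q'#} \<and> (p',q') \<in> R"
  by (rule weak_transfer_aux[OF _ refl refl])

lemma D_comb:
  assumes d1: "m1 = {#} \<and> mq = {#} \<or> (\<exists>a b. m1 = {#a#} \<and> mq = {#b#} \<and> (a,b) \<in> R1)"
    and d2: "mq = {#} \<and> mr = {#} \<or> (\<exists>a b. mq = {#a#} \<and> mr = {#b#} \<and> (a,b) \<in> R2)"
  shows "m1 = {#} \<and> mr = {#} \<or> (\<exists>a b. m1 = {#a#} \<and> mr = {#b#} \<and> (a,b) \<in> R1 O R2)"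
proof (rule disjE[OF d1])
  assume e: "m1 = {#} \<and> mq = {#}"
  have "mr = {#}"
  proof (rule disjE[OF d2])
    assume "mq = {#} \<and> mr = {#}" thus ?thesis by (rule conjunct2)
  next
    assume "\<exists>a b. mq = {#a#} \<and> mr = {#b#} \<and> (a,b) \<in> R2"
    then obtain a b where "mq = {#a#}" by blast
    thus ?thesis using e by simp
  qed
  thus ?thesis using e by (intro disjI1 conjI) (rule conjunct1)
next
  assume "\<exists>a b. m1 = {#a#} \<and> mq = {#b#} \<and> (a,b) \<in> R1"
  then obtain a b where ab: "m1 = {#a#}" "mq = {#b#}" "(a,b) \<in> R1" by blast
  obtain c where c: "mr = {#c#}" "(b,c) \<in> R2"
  proof (rule disjE[OF d2])
    assume "mq = {#} \<and> mr = {#}" thus ?thesis using ab(2) by simp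
  next
    assume "\<exists>a b. mq = {#a#} \<and> mr = {#b#} \<and> (a,b) \<in> R2"
    then obtain a' b' where "mq = {#a'#}" "mr = {#b'#}" "(a',b') \<in> R2" by blast
    moreover have "a' = b" using ab(2) \<open>mq = {#a'#}\<close> by simp
    ultimately show ?thesis using that by blast
  qed
  have ac: "(a,c) \<in> R1 O R2" using ab(3) c(2) by (rule relcompI)
  show ?thesis by (rule disjI2, rule exI[of _ a], rule exI[of _ c], rule conjI[OF ab(1) conjI[OF c(1) ac]])
qed

lemma comp_clause:
  assumes c1: "bb_clause tau T R1 p q" and h2: "half tau T R2" and qr: "(q,r) \<in> R2"
  shows "bb_clause tau T (R1 O R2) p r"
  unfolding bb_clause_def
proof (intro allI impI)
  fix l m1 assume tr: "(p, l, m1) \<in> T"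
  note XX = c1[unfolded bb_clause_def, rule_format, OF tr]
  show
    "l = tau \<and> (\<exists>m2. tau_star tau T {#r#} {#m2#} \<and> (p, m2) \<in> R1 O R2 \<and> (\<exists>m1'. m1 = {#m1'#} \<and> (m1', m2) \<in> R1 O R2)) \<or>
     (\<exists>s m2. tau_star tau T {#r#} {#s#} \<and> (s, l, m2) \<in> T \<and> (p, s) \<in> R1 O R2 \<and>
        (m1 = {#} \<and> m2 = {#} \<or> (\<exists>m1' m2'. m1 = {#m1'#} \<and> m2 = {#m2'#} \<and> (m1', m2') \<in> R1 O R2)))"
  proof (rule disjE[OF XX]; elim exE conjE)
    fix q' m1' assume A: "l = tau" "tau_star tau T {#q#} {#q'#}" "(p,q') \<in> R1" "m1 = {#m1'#}" "(m1',q') \<in> R1"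
    obtain r' where r': "tau_star tau T {#r#} {#r'#}" "(q',r') \<in> R2" using weak_transfer[OF A(2) qr h2] by blast
    have x1: "(p,r') \<in> R1 O R2" using A(3) r'(2) by (rule relcompI)
    have x2: "(m1',r') \<in> R1 O R2" using A(5) r'(2) by (rule relcompI)
    show ?thesis by (rule bb_left[OF A(1) r'(1) x1 A(4) x2])
  next
    fix q0 mq assume B: "tau_star tau T {#q#} {#q0#}" "(q0,l,mq) \<in> T" "(p,q0) \<in> R1"
      and B': "m1 = {#} \<and> mq = {#} \<or> (\<exists>a b. m1 = {#a#} \<and> mq = {#b#} \<and> (a,b) \<in> R1)"
    obtain r0 where r0: "tau_star tau T {#r#} {#r0#}" "(q0,r0) \<in> R2" using weak_transfer[OF B(1) qr h2] by blast
    have "bb_clause tau T R2 q0 r0" using half_D[OF h2 r0(2)] .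
    note YY = this[unfolded bb_clause_def, rule_format, OF B(2)]
    show ?thesis
    proof (rule disjE[OF YY]; elim exE conjE)
      fix r1 b' assume C: "l = tau" "tau_star tau T {#r0#} {#r1#}" "(q0,r1) \<in> R2" "mq = {#b'#}" "(b',r1) \<in> R2"
      obtain a where a: "m1 = {#a#}" "(a,b') \<in> R1"
      proof (rule disjE[OF B'])
        assume "m1 = {#} \<and> mq = {#}" thus ?thesis using C(4) by simp
      next
        assume "\<exists>a b. m1 = {#a#} \<and> mq = {#b#} \<and> (a,b) \<in> R1"
        then obtain a b where "m1 = {#a#}" "mq = {#b#}" "(a,b) \<in> R1" by blast
        moreover have "b = b'" using C(4) \<open>mq = {#b#}\<close> by simp
        ultimately show ?thesis using that by blast
      qed
      have t: "tau_star tau T {#r#} {#r1#}" using ts_trans[OF r0(1) C(2)] .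
      have x1: "(p,r1) \<in> R1 O R2" using B(3) C(3) by (rule relcompI)
      have x2: "(a,r1) \<in> R1 O R2" using a(2) C(5) by (rule relcompI)
      show ?thesis by (rule bb_left[OF C(1) t x1 a(1) x2])
    next
      fix r2 mr assume D: "tau_star tau T {#r0#} {#r2#}" "(r2,l,mr) \<in> T" "(q0,r2) \<in> R2"
        and D': "mq = {#} \<and> mr = {#} \<or> (\<exists>a b. mq = {#a#} \<and> mr = {#b#} \<and> (a,b) \<in> R2)"
      have t: "tau_star tau T {#r#} {#r2#}" using ts_trans[OF r0(1) D(1)] .
      have x1: "(p,r2) \<in> R1 O R2" using B(3) D(3) by (rule relcompI)
      show ?thesis by (rule bb_right[OF t D(2) x1 D_comb[OF B' D']])
    qed
  qed
qed

lemma bisim_comp: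
  assumes "branching_bisimulation tau UNIV T R1" "branching_bisimulation tau UNIV T R2"
  shows "branching_bisimulation tau UNIV T (R1 O R2)"
  unfolding bisim_UNIV
proof (intro allI impI)
  fix p r assume "(p,r) \<in> R1 O R2"
  then obtain q where pq: "(p,q) \<in> R1" and qr: "(q,r) \<in> R2" by (rule relcompE) simp
  have h1: "half tau T R1 \<and> half tau T (R1\<inverse>)" "half tau T R2 \<and> half tau T (R2\<inverse>)"
    using bisim_half[OF assms(1)] bisim_half[OF assms(2)] .
  have qp: "(q,p) \<in> R1\<inverse>" using pq by (rule converseI)
  have rq: "(r,q) \<in> R2\<inverse>" using qr by (rule converseI)
  have "bb_clause tau T (R1 O R2) p r"
    using comp_clause[OF half_D[OF conjunct1[OF h1(1)] pq] conjunct1[OF h1(2)] qr] .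
  moreover have "bb_clause tau T (R2\<inverse> O R1\<inverse>) r p"
    using comp_clause[OF half_D[OF conjunct2[OF h1(2)] rq] conjunct2[OF h1(1)] qp] .
  ultimately show "bb_clause tau T (R1 O R2) p r \<and> bb_clause tau T ((R1 O R2)\<inverse>) r p"
    by (simp add: converse_relcomp)
qed

lemma gB_trans: "(a,b) \<in> gB tau T \<Longrightarrow> (b,c) \<in> gB tau T \<Longrightarrow> (a,c) \<in> gB tau T"
  by (rule subsetD[OF bisim_in_gB[OF bisim_comp[OF gB_bisim[of tau T] gB_bisim[of tau T]]]], rule relcompI)

lemma gB_refl: "(a,b) \<in> gB tau T \<Longrightarrow> (a,a) \<in> gB tau T"
  by (rule gB_trans[OF _ gB_sym]) assumption+


definition subnet where
  "subnet S T1 T2 \<longleftrightarrow> T1 \<subseteq> T2 \<and> (\<forall>s l m. (s,l,m) \<in> T2 \<longrightarrow> s \<in> S \<longrightarrow> (s,l,m) \<in> T1)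
     \<and> (\<forall>s l m. (s,l,m) \<in> T2 \<longrightarrow> s \<in> S \<longrightarrow> set_mset m \<subseteq> S)"

lemma subnet_union: "subnet S1 T1 T \<Longrightarrow> subnet S2 T2 T \<Longrightarrow> subnet (S1 \<union> S2) (T1 \<union> T2) T"
  unfolding subnet_def by blast

lemma ts_mono: "tau_star tau T1 m m' \<Longrightarrow> T1 \<subseteq> T2 \<Longrightarrow> tau_star tau T2 m m'"
  by (induct rule: tau_star.induct) (auto intro: tau_star.intros)

lemma ts_down: "tau_star tau T2 m m' \<Longrightarrow> subnet S T1 T2 \<Longrightarrow> set_mset m \<subseteq> S
   \<Longrightarrow> tau_star tau T1 m m' \<and> set_mset m' \<subseteq> S"
proof (induct rule: tau_star.induct)
  case (ts_refl m)
  then show ?case by (auto intro: tau_star.intros)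
next
  case (ts_step s m' m'')
  then have "(s, tau, m') \<in> T1" "set_mset m' \<subseteq> S" unfolding subnet_def by auto
  then show ?case using ts_step by (auto intro: tau_star.intros)
qed

lemma bb_up:
  assumes sn: "subnet S T1 T2" and a: "a \<in> S" and c: "bb_clause tau T1 R a b"
  shows "bb_clause tau T2 R a b"
  unfolding bb_clause_def
proof (intro allI impI)
  fix l m1 assume "(a,l,m1) \<in> T2"
  hence "(a,l,m1) \<in> T1" using sn a unfolding subnet_def by blast
  note XX = c[unfolded bb_clause_def, rule_format, OF this]
  show "l = tau \<and> (\<exists>m2. tau_star tau T2 {#b#} {#m2#} \<and> (a, m2) \<in> R \<and> (\<exists>m1'. m1 = {#m1'#} \<and> (m1', m2) \<in> R)) \<or>
         (\<exists>s m2. tau_star tau T2 {#b#} {#s#} \<and> (s, l, m2) \<in> T2 \<and> (a, s) \<in> R \<and>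
             (m1 = {#} \<and> m2 = {#} \<or> (\<exists>m1' m2'. m1 = {#m1'#} \<and> m2 = {#m2'#} \<and> (m1', m2') \<in> R)))"
  proof (rule disjE[OF XX]; elim exE conjE)
    fix m2 m1' assume A: "l = tau" "tau_star tau T1 {#b#} {#m2#}" "(a, m2) \<in> R" "m1 = {#m1'#}" "(m1', m2) \<in> R"
    have "T1 \<subseteq> T2" using sn unfolding subnet_def by blast
    hence t: "tau_star tau T2 {#b#} {#m2#}" using ts_mono[OF A(2)] by blast
    show ?thesis by (rule bb_left[OF A(1) t A(3) A(4) A(5)])
  next
    fix s m2 assume B: "tau_star tau T1 {#b#} {#s#}" "(s, l, m2) \<in> T1" "(a, s) \<in> R"
      "m1 = {#} \<and> m2 = {#} \<or> (\<exists>m1' m2'. m1 = {#m1'#} \<and> m2 = {#m2'#} \<and> (m1', m2') \<in> R)"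
    have sub: "T1 \<subseteq> T2" using sn unfolding subnet_def by blast
    have t: "tau_star tau T2 {#b#} {#s#}" using ts_mono[OF B(1) sub] .
    have t2: "(s, l, m2) \<in> T2" using B(2) sub by blast
    show ?thesis by (rule bb_right[OF t t2 B(3) B(4)])
  qed
qed

lemma bb_down:
  assumes sn: "subnet S T1 T2" and a: "a \<in> S" and b: "b \<in> S" and c: "bb_clause tau T2 R a b"
  shows "bb_clause tau T1 (R \<inter> S \<times> S) a b"
  unfolding bb_clause_def
proof (intro allI impI)
  fix l m1 assume tr1: "(a,l,m1) \<in> T1"
  hence tr: "(a,l,m1) \<in> T2" using sn unfolding subnet_def by blast
  have m1S: "set_mset m1 \<subseteq> S" using sn tr a unfolding subnet_def by blast
  note XX = c[unfolded bb_clause_def, rule_format, OF tr]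
  show "l = tau \<and> (\<exists>m2. tau_star tau T1 {#b#} {#m2#} \<and> (a, m2) \<in> R \<inter> S \<times> S \<and> (\<exists>m1'. m1 = {#m1'#} \<and> (m1', m2) \<in> R \<inter> S \<times> S)) \<or>
         (\<exists>s m2. tau_star tau T1 {#b#} {#s#} \<and> (s, l, m2) \<in> T1 \<and> (a, s) \<in> R \<inter> S \<times> S \<and>
             (m1 = {#} \<and> m2 = {#} \<or> (\<exists>m1' m2'. m1 = {#m1'#} \<and> m2 = {#m2'#} \<and> (m1', m2') \<in> R \<inter> S \<times> S)))"
  proof (rule disjE[OF XX]; elim exE conjE)
    fix m2 m1' assume A: "l = tau" "tau_star tau T2 {#b#} {#m2#}" "(a, m2) \<in> R" "m1 = {#m1'#}" "(m1', m2) \<in> R"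
    have t: "tau_star tau T1 {#b#} {#m2#}" "m2 \<in> S" using ts_down[OF A(2) sn] b by auto
    have r: "(a, m2) \<in> R \<inter> S \<times> S" "(m1', m2) \<in> R \<inter> S \<times> S" using A a m1S t(2) by auto
    show ?thesis by (rule bb_left[OF A(1) t(1) r(1) A(4) r(2)])
  next
    fix s m2 assume B: "tau_star tau T2 {#b#} {#s#}" "(s, l, m2) \<in> T2" "(a, s) \<in> R"
      "m1 = {#} \<and> m2 = {#} \<or> (\<exists>m1' m2'. m1 = {#m1'#} \<and> m2 = {#m2'#} \<and> (m1', m2') \<in> R)"
    have t: "tau_star tau T1 {#b#} {#s#}" "s \<in> S" using ts_down[OF B(1) sn] b by auto
    hence t2: "(s, l, m2) \<in> T1" "set_mset m2 \<subseteq> S" using sn B(2) unfolding subnet_def by blast+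
    have D: "m1 = {#} \<and> m2 = {#} \<or> (\<exists>m1' m2'. m1 = {#m1'#} \<and> m2 = {#m2'#} \<and> (m1', m2') \<in> R \<inter> S \<times> S)"
    proof (rule disjE[OF B(4)])
      assume "m1 = {#} \<and> m2 = {#}" thus ?thesis by (rule disjI1)
    next
      assume "\<exists>m1' m2'. m1 = {#m1'#} \<and> m2 = {#m2'#} \<and> (m1', m2') \<in> R"
      then obtain x y where xy: "m1 = {#x#}" "m2 = {#y#}" "(x,y) \<in> R" by blast
      have "x \<in> S" "y \<in> S" using m1S t2(2) xy(1,2) by auto
      hence xyS: "(x,y) \<in> R \<inter> S \<times> S" using xy(3) by simp
      show ?thesis by (rule disjI2, rule exI[of _ x], rule exI[of _ y], rule conjI[OF xy(1) conjI[OF xy(2) xyS]])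
    qed
    have aS: "(a, s) \<in> R \<inter> S \<times> S" using B(3) a t(2) by simp
    show ?thesis by (rule bb_right[OF t(1) t2(1) aS D])
  qed
qed

lemma bisimilarity_up:
  assumes sn: "subnet S T1 T2"
  shows "branching_bisimilarity tau S T1 \<subseteq> gB tau T2"
proof
  fix x assume "x \<in> branching_bisimilarity tau S T1"
  then obtain R where R: "branching_bisimulation tau S T1 R" "x \<in> R"
    by (auto simp: branching_bisimilarity_def)
  have bR: "branching_bisimulation tau UNIV T2 R"
    unfolding bisim_UNIV
  proof (intro allI impI)
    fix a b assume ab: "(a,b) \<in> R"
    have RS: "R \<subseteq> S \<times> S" using R(1) unfolding branching_bisimulation_def by (rule conjunct1)
    have aS: "a \<in> S" "b \<in> S" using subsetD[OF RS ab] by auto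
    have cc: "bb_clause tau T1 R a b \<and> bb_clause tau T1 (R\<inverse>) b a"
      using R(1) ab unfolding branching_bisimulation_def by blast
    show "bb_clause tau T2 R a b \<and> bb_clause tau T2 (R\<inverse>) b a"
      by (rule conjI[OF bb_up[OF sn aS(1) conjunct1[OF cc]] bb_up[OF sn aS(2) conjunct2[OF cc]]])
  qed
  show "x \<in> gB tau T2" by (rule subsetD[OF bisim_in_gB[OF bR] R(2)])
qed

lemma bisimilarity_down:
  assumes sn: "subnet S T1 T2"
  shows "gB tau T2 \<inter> S \<times> S \<subseteq> branching_bisimilarity tau S T1"
proof -
  have H: "\<forall>a b. (a,b) \<in> gB tau T2 \<inter> S \<times> S \<longrightarrow> bb_clause tau T1 (gB tau T2 \<inter> S \<times> S) a b \<and> bb_clause tau T1 ((gB tau T2 \<inter> S \<times> S)\<inverse>) b a"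
  proof (intro allI impI)
    fix a b assume ab: "(a,b) \<in> gB tau T2 \<inter> S \<times> S"
    have ab': "(a,b) \<in> gB tau T2" using ab by simp
    have "bb_clause tau T2 (gB tau T2) a b \<and> bb_clause tau T2 ((gB tau T2)\<inverse>) b a"
      using gB_bisim[of tau T2, unfolded bisim_UNIV, rule_format, OF ab'] .
    hence "bb_clause tau T2 (gB tau T2) a b" "bb_clause tau T2 ((gB tau T2)\<inverse>) b a" by auto
    have abS: "a \<in> S" "b \<in> S" using ab by auto
    have "bb_clause tau T1 (gB tau T2 \<inter> S \<times> S) a b" "bb_clause tau T1 ((gB tau T2)\<inverse> \<inter> S \<times> S) b a"
      using bb_down[OF sn abS(1) abS(2) \<open>bb_clause tau T2 (gB tau T2) a b\<close>]
        bb_down[OF sn abS(2) abS(1) \<open>bb_clause tau T2 ((gB tau T2)\<inverse>) b a\<close>] by simp_all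
    moreover have "(gB tau T2)\<inverse> \<inter> S \<times> S = (gB tau T2 \<inter> S \<times> S)\<inverse>" by auto
    ultimately show "bb_clause tau T1 (gB tau T2 \<inter> S \<times> S) a b \<and> bb_clause tau T1 ((gB tau T2 \<inter> S \<times> S)\<inverse>) b a"
      by simp
  qed
  have "branching_bisimulation tau S T1 (gB tau T2 \<inter> S \<times> S)"
    unfolding branching_bisimulation_def by (rule conjI[OF Int_lower2 H])
  thus ?thesis unfolding branching_bisimilarity_def by (rule Union_upper[OF CollectI])
qed

section \<open>Additive closure\<close>

lemma ac_mono: "(m1,m2) \<in> additive_closure R \<Longrightarrow> R \<subseteq> R' \<Longrightarrow> (m1,m2) \<in> additive_closure R'"
  by (induct rule: additive_closure.induct) (auto intro: additive_closure.intros)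

lemma ac_restrict: "(m1,m2) \<in> additive_closure R \<Longrightarrow> set_mset m1 \<subseteq> S \<Longrightarrow> set_mset m2 \<subseteq> S
  \<Longrightarrow> (m1,m2) \<in> additive_closure (R \<inter> S \<times> S)"
  by (induct rule: additive_closure.induct) (auto intro: additive_closure.intros)

lemma ac_size: "(m1,m2) \<in> additive_closure R \<Longrightarrow> size m1 = size m2"
  by (induct rule: additive_closure.induct) auto

lemma ac_exists: "(m1,m2) \<in> additive_closure R \<Longrightarrow> t \<in># m2 \<Longrightarrow> \<exists>s\<in>#m1. (s,t) \<in> R"
  by (induct rule: additive_closure.induct) auto

lemma ac_exists1: "(m1,m2) \<in> additive_closure R \<Longrightarrow> s \<in># m1 \<Longrightarrow> \<exists>t\<in>#m2. (s,t) \<in> R"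
  by (induct rule: additive_closure.induct) auto

lemma ac_count:
  assumes ac: "(m1,m2) \<in> additive_closure R"
    and sym: "\<And>x y. (x,y) \<in> R \<Longrightarrow> (y,x) \<in> R"
    and trans: "\<And>x y z. (x,y) \<in> R \<Longrightarrow> (y,z) \<in> R \<Longrightarrow> (x,z) \<in> R"
  shows "size (filter_mset (\<lambda>y. (a,y) \<in> R) m1) = size (filter_mset (\<lambda>y. (a,y) \<in> R) m2)"
  using ac
proof (induct rule: additive_closure.induct)
  case ac_empty
  then show ?case by simp
next
  case (ac_add s1 s2 m1 m2)
  have "(a,s1) \<in> R \<longleftrightarrow> (a,s2) \<in> R"
  proof
    assume "(a,s1) \<in> R" thus "(a,s2) \<in> R" using ac_add(1) by (rule trans)
  next
    assume "(a,s2) \<in> R" thus "(a,s1) \<in> R" using sym[OF ac_add(1)] by (rule trans)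
  qed
  then show ?case using ac_add(3) by simp
qed

lemma ac_union: "(m1,m2) \<in> additive_closure R \<Longrightarrow> (n1,n2) \<in> additive_closure R
  \<Longrightarrow> (m1+n1,m2+n2) \<in> additive_closure R"
  by (induct rule: additive_closure.induct) (auto intro: additive_closure.intros)

lemma ac_refl: "(\<forall>x\<in>#m. (x,x) \<in> R) \<Longrightarrow> (m,m) \<in> additive_closure R"
  by (induct m) (auto intro: additive_closure.intros)

lemma ac_cancel:
  assumes ac: "(add_mset s rest, rest + n) \<in> additive_closure R"
    and sym: "\<And>x y. (x,y) \<in> R \<Longrightarrow> (y,x) \<in> R"
    and trans: "\<And>x y z. (x,y) \<in> R \<Longrightarrow> (y,z) \<in> R \<Longrightarrow> (x,z) \<in> R"
  shows "\<exists>x. n = {#x#} \<and> (s,x) \<in> R"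
proof -
  have "size n = 1" using ac_size[OF ac] by simp
  then obtain x where nx: "n = {#x#}" using size_1_singleton_mset by blast
  obtain t where st: "(s,t) \<in> R" using ac_exists1[OF ac] by auto
  have ss: "(s,s) \<in> R" using trans[OF st sym[OF st]] .
  have "size (filter_mset (\<lambda>y. (s,y) \<in> R) (add_mset s rest)) = size (filter_mset (\<lambda>y. (s,y) \<in> R) (rest + n))"
    by (rule ac_count[OF ac sym trans])
  hence "(s,x) \<in> R" using ss nx by (auto split: if_splits)
  show ?thesis by (rule exI[of "\<lambda>x. n = {#x#} \<and> (s,x) \<in> R" x, OF conjI[OF nx \<open>(s,x) \<in> R\<close>]])
qed


definition gT :: "('c \<Rightarrow> ('a, 'c) cfm) \<Rightarrow> (('a, 'c) cfm \<times> 'a act \<times> ('a, 'c) cfm multiset) set" where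
  "gT \<Delta> = {(s, \<mu>, dec s') | s \<mu> s'. step \<Delta> s \<mu> s'}"

lemma step_dec: "step \<Delta> p \<mu> p' \<Longrightarrow> \<exists>s s' rest. dec p = add_mset s rest \<and> step \<Delta> s \<mu> s' \<and> dec p' = rest + dec s'"
proof (induct rule: step.induct)
  case (st_pre \<mu> p)
  then show ?case by (auto intro: step.intros)
next
  case (st_cst C \<mu> p')
  have "step \<Delta> (Cst C) \<mu> p'" using st_cst(1) by (rule step.st_cst)
  then show ?case by (intro exI[of _ "Cst C"] exI[of _ p'] exI[of _ "{#}"]) simp
next
  case (st_suml p \<mu> p' q)
  have "step \<Delta> (Sum p q) \<mu> p'" using st_suml(1) by (rule step.st_suml)
  then show ?case by (intro exI[of _ "Sum p q"] exI[of _ p'] exI[of _ "{#}"]) simp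
next
  case (st_sumr p \<mu> p' q)
  have "step \<Delta> (Sum q p) \<mu> p'" using st_sumr(1) by (rule step.st_sumr)
  then show ?case by (intro exI[of _ "Sum q p"] exI[of _ p'] exI[of _ "{#}"]) simp
next
  case (st_parl p \<mu> p' q)
  then obtain s s' rest where "dec p = add_mset s rest" "step \<Delta> s \<mu> s'" "dec p' = rest + dec s'" by blast
  moreover have "dec (Par p q) = add_mset s (rest + dec q)" "dec (Par p' q) = (rest + dec q) + dec s'"
    using \<open>dec p = add_mset s rest\<close> \<open>dec p' = rest + dec s'\<close> by simp_all
  ultimately show ?case by (intro exI[of _ s] exI[of _ s'] exI[of _ "rest + dec q"] conjI) simp_all
next
  case (st_parr p \<mu> p' q)
  then obtain s s' rest where "dec p = add_mset s rest" "step \<Delta> s \<mu> s'" "dec p' = rest + dec s'" by blast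
  moreover have "dec (Par q p) = add_mset s (dec q + rest)" "dec (Par q p') = (dec q + rest) + dec s'"
    using \<open>dec p = add_mset s rest\<close> \<open>dec p' = rest + dec s'\<close> by simp_all
  ultimately show ?case by (intro exI[of _ s] exI[of _ s'] exI[of _ "dec q + rest"] conjI) simp_all
qed

lemma step_elem: "dec p = add_mset s rest \<Longrightarrow> step \<Delta> s \<mu> s' \<Longrightarrow> \<exists>p''. step \<Delta> p \<mu> p'' \<and> dec p'' = rest + dec s'"
proof (induct p arbitrary: rest)
  case CNil
  then show ?case by simp
next
  case (Pre x1 p)
  then show ?case by auto
next
  case (Sum p1 p2)
  then show ?case by auto
next
  case (Cst x)
  then show ?case by auto
next
  case (Par p1 p2)
  have "s \<in># dec p1 + dec p2" using Par(3) by simp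
  then consider "s \<in># dec p1" | "s \<in># dec p2" by auto
  then show ?case
  proof cases
    case 1
    then obtain r1 where r1: "dec p1 = add_mset s r1" by (meson multi_member_split)
    hence rest: "rest = r1 + dec p2" using Par(3) by simp
    obtain p1'' where "step \<Delta> p1 \<mu> p1''" "dec p1'' = r1 + dec s'" using Par(1)[OF r1 Par(4)] by blast
    thus ?thesis using rest by (auto intro!: exI[of _ "Par p1'' p2"] step.intros)
  next
    case 2
    then obtain r2 where r2: "dec p2 = add_mset s r2" by (meson multi_member_split)
    hence rest: "rest = dec p1 + r2" using Par(3) by simp
    obtain p2'' where "step \<Delta> p2 \<mu> p2''" "dec p2'' = r2 + dec s'" using Par(2)[OF r2 Par(4)] by blast
    thus ?thesis using rest by (auto intro!: exI[of _ "Par p1 p2''"] step.intros)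
  qed
qed

lemma reach_dec: "reach \<Delta> q q' \<Longrightarrow> set_mset (dec q') \<subseteq> net_places \<Delta> q"
proof (induct rule: reach.induct)
  case reach_refl
  then show ?case by (auto intro: net_places.intros)
next
  case (reach_step q p' \<mu> p'')
  then obtain s s' rest where A: "dec p' = add_mset s rest" "step \<Delta> s \<mu> s'" "dec p'' = rest + dec s'"
    using step_dec by blast
  then show ?case using reach_step(2) by (auto intro: net_places.np_step)
qed

lemma places_reach: "s \<in> net_places \<Delta> p \<Longrightarrow> \<exists>p'. reach \<Delta> p p' \<and> s \<in># dec p'"
proof (induct rule: net_places.induct)
  case (np_init s)
  then show ?case by (auto intro: reach.intros)
next
  case (np_step s \<mu> s' s'')
  then obtain p' where p': "reach \<Delta> p p'" "s \<in># dec p'" by blast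
  then obtain rest where "dec p' = add_mset s rest" by (meson multi_member_split)
  then obtain p'' where "step \<Delta> p' \<mu> p''" "dec p'' = rest + dec s'" using step_elem np_step(3) by blast
  then show ?case using p' np_step(4) by (auto intro: reach.intros)
qed

lemma subnet_net: "subnet (net_places \<Delta> p) (net_trans \<Delta> p) (gT \<Delta>)"
  unfolding subnet_def gT_def net_trans_def by (auto intro: net_places.np_step)

lemma subnet_rnet: "subnet (restr_places (net_places \<Delta> p)) (restr_trans H (net_trans \<Delta> p)) (restr_trans H (gT \<Delta>))"
  unfolding subnet_def gT_def net_trans_def restr_trans_def restr_places_def
  by (fastforce intro: net_places.np_step)

definition lift :: "('x \<times> 'x) set \<Rightarrow> ('x restr \<times> 'x restr) set" where
  "lift R = {(Restr a, Restr b) | a b. (a,b) \<in> R}"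

lemma not_high_tau: "\<not> is_high H Tau"
  by (simp add: is_high_def)

lemma ts_lift: "tau_star Tau T m m' \<Longrightarrow> tau_star Tau (restr_trans H T) (image_mset Restr m) (image_mset Restr m')"
proof (induct rule: tau_star.induct)
  case (ts_refl m)
  then show ?case by (rule tau_star.ts_refl)
next
  case (ts_step s m' m'')
  have "(Restr s, Tau, image_mset Restr m') \<in> restr_trans H T"
    using ts_step(1) not_high_tau unfolding restr_trans_def by blast
  then show ?case using ts_step(3) by (auto intro: tau_star.ts_step)
qed

lemma bb_lift:
  assumes c: "bb_clause Tau T R a b"
  shows "bb_clause Tau (restr_trans H T) (lift R) (Restr a) (Restr b)"
  unfolding bb_clause_def
proof (intro allI impI)
  fix l m1 assume "(Restr a, l, m1) \<in> restr_trans H T"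
  then obtain m0 where tr: "(a, l, m0) \<in> T" "m1 = image_mset Restr m0" "\<not> is_high H l"
    unfolding restr_trans_def by auto
  note XX = c[unfolded bb_clause_def, rule_format, OF tr(1)]
  show "l = Tau \<and> (\<exists>m2. tau_star Tau (restr_trans H T) {#Restr b#} {#m2#} \<and> (Restr a, m2) \<in> lift R \<and> (\<exists>m1'. m1 = {#m1'#} \<and> (m1', m2) \<in> lift R)) \<or>
         (\<exists>s m2. tau_star Tau (restr_trans H T) {#Restr b#} {#s#} \<and> (s, l, m2) \<in> restr_trans H T \<and> (Restr a, s) \<in> lift R \<and>
             (m1 = {#} \<and> m2 = {#} \<or> (\<exists>m1' m2'. m1 = {#m1'#} \<and> m2 = {#m2'#} \<and> (m1', m2') \<in> lift R)))"
  proof (rule disjE[OF XX]; elim exE conjE)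
    fix m2 m1' assume A: "l = Tau" "tau_star Tau T {#b#} {#m2#}" "(a, m2) \<in> R" "m0 = {#m1'#}" "(m1', m2) \<in> R"
    have t: "tau_star Tau (restr_trans H T) {#Restr b#} {#Restr m2#}" using ts_lift[OF A(2)] by simp
    have l1: "(Restr a, Restr m2) \<in> lift R" "(Restr m1', Restr m2) \<in> lift R" using A(3,5) unfolding lift_def by blast+
    have m1: "m1 = {#Restr m1'#}" using tr(2) A(4) by simp
    show ?thesis by (rule bb_left[OF A(1) t l1(1) m1 l1(2)])
  next
    fix s m2 assume B: "tau_star Tau T {#b#} {#s#}" "(s, l, m2) \<in> T" "(a, s) \<in> R"
      "m0 = {#} \<and> m2 = {#} \<or> (\<exists>m1' m2'. m0 = {#m1'#} \<and> m2 = {#m2'#} \<and> (m1', m2') \<in> R)"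
    have t: "tau_star Tau (restr_trans H T) {#Restr b#} {#Restr s#}" using ts_lift[OF B(1)] by simp
    have t2: "(Restr s, l, image_mset Restr m2) \<in> restr_trans H T" using B(2) tr(3) unfolding restr_trans_def by blast
    have aS: "(Restr a, Restr s) \<in> lift R" using B(3) unfolding lift_def by blast
    have D: "m1 = {#} \<and> image_mset Restr m2 = {#} \<or> (\<exists>x y. m1 = {#x#} \<and> image_mset Restr m2 = {#y#} \<and> (x,y) \<in> lift R)"
    proof (rule disjE[OF B(4)])
      assume "m0 = {#} \<and> m2 = {#}" thus ?thesis using tr(2) by simp
    next
      assume "\<exists>m1' m2'. m0 = {#m1'#} \<and> m2 = {#m2'#} \<and> (m1', m2') \<in> R"
      then obtain x y where xy: "m0 = {#x#}" "m2 = {#y#}" "(x,y) \<in> R" by blast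
      hence "(Restr x, Restr y) \<in> lift R" unfolding lift_def by blast
      thus ?thesis using xy tr(2) by simp
    qed
    show ?thesis by (rule bb_right[OF t t2 aS D])
  qed
qed

lemma lift_conv: "(lift R)\<inverse> = lift (R\<inverse>)"
  unfolding lift_def by auto

lemma bisim_lift:
  assumes b: "branching_bisimulation Tau UNIV T R"
  shows "branching_bisimulation Tau UNIV (restr_trans H T) (lift R)"
  unfolding bisim_UNIV
proof (intro allI impI)
  fix x y assume "(x,y) \<in> lift R"
  then obtain a b where ab: "x = Restr a" "y = Restr b" "(a,b) \<in> R" unfolding lift_def by blast
  have cc: "bb_clause Tau T R a b \<and> bb_clause Tau T (R\<inverse>) b a"
    using b[unfolded bisim_UNIV, rule_format, OF ab(3)] .
  have "bb_clause Tau (restr_trans H T) (lift R) (Restr a) (Restr b)"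
    by (rule bb_lift[OF conjunct1[OF cc]])
  moreover have "bb_clause Tau (restr_trans H T) (lift (R\<inverse>)) (Restr b) (Restr a)"
    by (rule bb_lift[OF conjunct2[OF cc]])
  ultimately show "bb_clause Tau (restr_trans H T) (lift R) x y \<and> bb_clause Tau (restr_trans H T) ((lift R)\<inverse>) y x"
    unfolding lift_conv ab(1,2) by (rule conjI)
qed

lemma gB_lift: "(a,b) \<in> gB Tau T \<Longrightarrow> (Restr a, Restr b) \<in> gB Tau (restr_trans H T)"
proof -
  assume "(a,b) \<in> gB Tau T"
  hence "(Restr a, Restr b) \<in> lift (gB Tau T)" unfolding lift_def by blast
  thus ?thesis by (rule subsetD[OF bisim_in_gB[OF bisim_lift[OF gB_bisim]]])
qed


lemma img_single: "image_mset f M = {#y#} \<Longrightarrow> \<exists>x. M = {#x#} \<and> y = f x"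
proof -
  assume a: "image_mset f M = {#y#}"
  hence "size M = 1" by (metis size_image_mset size_single)
  then obtain x where "M = {#x#}" using size_1_singleton_mset by blast
  thus ?thesis using a by simp
qed

theorem corollary4p2:
  fixes \<Delta> :: "'c::finite \<Rightarrow> ('a::finite, 'c) cfm"
    and H :: "'a set"
    and p q :: "('a, 'c) cfm"
  assumes "cfm_process \<Delta> p"
    and "cfm_process \<Delta> q"
    and "proc_team_equiv \<Delta> p q"
    and "DNI \<Delta> H p"
  shows "DNI \<Delta> H q"
proof -
  define T where "T = gT \<Delta>"
  define Tr where "Tr = restr_trans H (gT \<Delta>)"
  define B where "B = gB Tau T"
  define Br where "Br = gB Tau Tr"
  define Sp where "Sp = net_places \<Delta> p"
  define Sq where "Sq = net_places \<Delta> q"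
  have Bsym: "\<And>x y. (x,y) \<in> B \<Longrightarrow> (y,x) \<in> B" unfolding B_def by (rule gB_sym)
  have Btrans: "\<And>x y z. (x,y) \<in> B \<Longrightarrow> (y,z) \<in> B \<Longrightarrow> (x,z) \<in> B" unfolding B_def by (rule gB_trans)
  have Brsym: "\<And>x y. (x,y) \<in> Br \<Longrightarrow> (y,x) \<in> Br" unfolding Br_def by (rule gB_sym)
  have Brtrans: "\<And>x y z. (x,y) \<in> Br \<Longrightarrow> (y,z) \<in> Br \<Longrightarrow> (x,z) \<in> Br" unfolding Br_def by (rule gB_trans)
  have Bclause: "\<And>a b. (a,b) \<in> B \<Longrightarrow> bb_clause Tau T B a b \<and> bb_clause Tau T (B\<inverse>) b a"
    unfolding B_def using gB_bisim[of Tau T, unfolded bisim_UNIV] by blast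
  have lift: "\<And>a b. (a,b) \<in> B \<Longrightarrow> (Restr a, Restr b) \<in> Br"
    unfolding B_def Br_def T_def Tr_def by (rule gB_lift)
  have snp: "subnet Sp (net_trans \<Delta> p) T" unfolding Sp_def T_def by (rule subnet_net)
  have ac1: "(dec p, dec q) \<in> additive_closure B"
  proof -
    have "subnet (net_places \<Delta> p \<union> net_places \<Delta> q) (net_trans \<Delta> p \<union> net_trans \<Delta> q) T"
      unfolding T_def by (rule subnet_union; rule subnet_net)
    hence "branching_bisimilarity Tau (net_places \<Delta> p \<union> net_places \<Delta> q) (net_trans \<Delta> p \<union> net_trans \<Delta> q) \<subseteq> B"
      unfolding B_def by (rule bisimilarity_up)
    moreover have "(dec p, dec q) \<in> additive_closure (branching_bisimilarity Tau (net_places \<Delta> p \<union> net_places \<Delta> q) (net_trans \<Delta> p \<union> net_trans \<Delta> q))"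
      using assms(3) unfolding proc_team_equiv_def team_equiv_def .
    ultimately show ?thesis using ac_mono by blast
  qed
  have P: "\<exists>x. dec s' = {#x#} \<and> (Restr s, Restr x) \<in> Br"
    if s: "s \<in> Sp" and h: "h \<in> H" and st: "step \<Delta> s (Vis h) s'" for s h s'
  proof -
    obtain p' where p': "reach \<Delta> p p'" "s \<in># dec p'" using places_reach s unfolding Sp_def by blast
    then obtain rest where rest: "dec p' = add_mset s rest" by (meson multi_member_split)
    obtain p'' where p'': "step \<Delta> p' (Vis h) p''" "dec p'' = rest + dec s'" using step_elem[OF rest st] by blast
    have "reach \<Delta> p p''" by (rule reach.reach_step[OF p'(1) p''(1)])
    have te: "restr_team_equiv \<Delta> H p' p''"
      using assms(4)[unfolded DNI_def, rule_format, OF conjI[OF p'(1) conjI[OF \<open>reach \<Delta> p p''\<close> conjI[OF h p''(1)]]]] .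
    have sn: "subnet (restr_places (net_places \<Delta> p') \<union> restr_places (net_places \<Delta> p''))
        (restr_trans H (net_trans \<Delta> p') \<union> restr_trans H (net_trans \<Delta> p'')) Tr"
      unfolding Tr_def by (rule subnet_union; rule subnet_rnet)
    have "(image_mset Restr (dec p'), image_mset Restr (dec p'')) \<in> additive_closure (gB Tau Tr)"
      by (rule ac_mono[OF te[unfolded restr_team_equiv_def team_equiv_def] bisimilarity_up[OF sn]])
    hence "(image_mset Restr (dec p'), image_mset Restr (dec p'')) \<in> additive_closure Br"
      unfolding Br_def .
    hence "(add_mset (Restr s) (image_mset Restr rest), image_mset Restr rest + image_mset Restr (dec s')) \<in> additive_closure Br"
      using rest p''(2) by simp
    hence "\<exists>x'. image_mset Restr (dec s') = {#x'#} \<and> (Restr s, x') \<in> Br"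
      by (rule ac_cancel) (erule Brsym, erule (1) Brtrans)
    then obtain x' where x': "image_mset Restr (dec s') = {#x'#}" "(Restr s, x') \<in> Br"
      by blast
    obtain x where x1: "dec s' = {#x#}" and x2: "x' = Restr x"
      using img_single[OF x'(1)] by (elim exE conjE)
    have "(Restr s, Restr x) \<in> Br" using x'(2) unfolding x2 .
    thus ?thesis using x1 by (intro exI[of _ x] conjI)
  qed
  have Q: "\<exists>s\<in>Sp. (s,t) \<in> B" if t: "t \<in> Sq" for t
    using t unfolding Sq_def
  proof (induct rule: net_places.induct)
    case (np_init t)
    then obtain s where "s \<in># dec p" "(s,t) \<in> B" using ac_exists[OF ac1] by blast
    then show ?case unfolding Sp_def by (auto intro: net_places.np_init)
  next
    case (np_step t \<mu> t' t'')
    then obtain s where s: "s \<in> Sp" "(s,t) \<in> B" by blast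
    have tr: "(t, \<mu>, dec t') \<in> T" unfolding T_def gT_def using np_step(3) by blast
    have c: "bb_clause Tau T (B\<inverse>) t s" using Bclause[OF s(2)] by blast
    note XX = c[unfolded bb_clause_def, rule_format, OF tr]
    show ?case
    proof (rule disjE[OF XX]; elim exE conjE)
      fix m2 m1' assume A: "\<mu> = Tau" "tau_star Tau T {#s#} {#m2#}" "(t, m2) \<in> B\<inverse>" "dec t' = {#m1'#}" "(m1', m2) \<in> B\<inverse>"
      have "m2 \<in> Sp" using ts_down[OF A(2) snp] s(1) by auto
      thus ?thesis using A np_step(4) by auto
    next
      fix s0 m2 assume B: "tau_star Tau T {#s#} {#s0#}" "(s0, \<mu>, m2) \<in> T" "(t, s0) \<in> B\<inverse>"
        "dec t' = {#} \<and> m2 = {#} \<or> (\<exists>m1' m2'. dec t' = {#m1'#} \<and> m2 = {#m2'#} \<and> (m1', m2') \<in> B\<inverse>)"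
      have "s0 \<in> Sp" using ts_down[OF B(1) snp] s(1) by auto
      hence m2S: "set_mset m2 \<subseteq> Sp" using snp B(2) unfolding subnet_def by blast
      from B(4) np_step(4) obtain a b where "dec t' = {#a#}" "m2 = {#b#}" "(a,b) \<in> B\<inverse>" by auto
      thus ?thesis using m2S np_step(4) by auto
    qed
  qed
  have Brefl: "(Restr t, Restr t) \<in> Br" if tq: "t \<in> Sq" for t
  proof -
    obtain s where st: "(s,t) \<in> B" using Q[OF tq] by blast
    have "(t,t) \<in> B" by (rule Btrans[OF Bsym[OF st] st])
    thus ?thesis using lift by blast
  qed
  show ?thesis
    unfolding DNI_def
  proof (intro allI impI, elim conjE)
    fix q' q'' h assume rq': "reach \<Delta> q q'" and rq'': "reach \<Delta> q q''" and h: "h \<in> H"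
      and st: "step \<Delta> q' (Vis h) q''"
    obtain t t' rest where tt: "dec q' = add_mset t rest" "step \<Delta> t (Vis h) t'" "dec q'' = rest + dec t'"
      using step_dec[OF st] by blast
    have qS: "set_mset (dec q') \<subseteq> Sq" using reach_dec[OF rq'] unfolding Sq_def .
    hence tS: "t \<in> Sq" and restS: "set_mset rest \<subseteq> Sq" using tt(1) by auto
    obtain s where s: "s \<in> Sp" "(s,t) \<in> B" using Q[OF tS] by blast
    have tr: "(t, Vis h, dec t') \<in> T" unfolding T_def gT_def using tt(2) by blast
    have c: "bb_clause Tau T (B\<inverse>) t s" using Bclause[OF s(2)] by blast
    note XX = c[unfolded bb_clause_def, rule_format, OF tr]
    obtain s0 m2 where B: "tau_star Tau T {#s#} {#s0#}" "(s0, Vis h, m2) \<in> T" "(t, s0) \<in> B\<inverse>"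
        "dec t' = {#} \<and> m2 = {#} \<or> (\<exists>m1' m2'. dec t' = {#m1'#} \<and> m2 = {#m2'#} \<and> (m1', m2') \<in> B\<inverse>)"
    proof -
      have "\<exists>s0 m2. tau_star Tau T {#s#} {#s0#} \<and> (s0, Vis h, m2) \<in> T \<and> (t, s0) \<in> B\<inverse> \<and>
        (dec t' = {#} \<and> m2 = {#} \<or> (\<exists>m1' m2'. dec t' = {#m1'#} \<and> m2 = {#m2'#} \<and> (m1', m2') \<in> B\<inverse>))"
        using XX by (simp only: act.distinct simp_thms)
      thus ?thesis using that by blast
    qed
    have s0S: "s0 \<in> Sp" using ts_down[OF B(1) snp] s(1) by auto
    obtain s0' where s0': "m2 = dec s0'" "step \<Delta> s0 (Vis h) s0'" using B(2) unfolding T_def gT_def by blast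
    obtain x where x: "dec s0' = {#x#}" "(Restr s0, Restr x) \<in> Br" using P[OF s0S h s0'(2)] by blast
    obtain a where a: "dec t' = {#a#}" "(a, x) \<in> B\<inverse>" using B(4) s0'(1) x(1) by auto
    have "(Restr t, Restr s0) \<in> Br" by (rule lift[OF Bsym[OF converseD[OF B(3)]]])
    moreover have "(Restr x, Restr a) \<in> Br" by (rule lift[OF converseD[OF a(2)]])
    ultimately have ta: "(Restr t, Restr a) \<in> Br" using Brtrans[OF Brtrans[OF _ x(2)]] by blast
    have "(image_mset Restr rest, image_mset Restr rest) \<in> additive_closure Br"
    proof (rule ac_refl, intro ballI)
      fix y assume "y \<in># image_mset Restr rest"
      then obtain z where z: "z \<in># rest" "y = Restr z" by (auto simp: image_iff)
      have "z \<in> Sq" using restS z(1) by blast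
      thus "(y,y) \<in> Br" using Brefl z(2) by blast
    qed
    hence acm: "(image_mset Restr (dec q'), image_mset Restr (dec q'')) \<in> additive_closure Br"
      using tt(1,3) a(1) ta by (auto intro: additive_closure.ac_add)
    define S where "S = restr_places (net_places \<Delta> q') \<union> restr_places (net_places \<Delta> q'')"
    have sn: "subnet S (restr_trans H (net_trans \<Delta> q') \<union> restr_trans H (net_trans \<Delta> q'')) Tr"
      unfolding Tr_def S_def by (rule subnet_union; rule subnet_rnet)
    have "set_mset (image_mset Restr (dec q')) \<subseteq> S" "set_mset (image_mset Restr (dec q'')) \<subseteq> S"
      unfolding S_def restr_places_def by (auto intro: net_places.np_init)
    from ac_restrict[OF acm this] have "(image_mset Restr (dec q'), image_mset Restr (dec q'')) \<in> additive_closure (Br \<inter> S \<times> S)" .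
    moreover have "Br \<inter> S \<times> S \<subseteq> branching_bisimilarity Tau S (restr_trans H (net_trans \<Delta> q') \<union> restr_trans H (net_trans \<Delta> q''))"
      unfolding Br_def by (rule bisimilarity_down[OF sn])
    ultimately have "(image_mset Restr (dec q'), image_mset Restr (dec q'')) \<in> additive_closure (branching_bisimilarity Tau S (restr_trans H (net_trans \<Delta> q') \<union> restr_trans H (net_trans \<Delta> q'')))"
      by (rule ac_mono)
    thus "restr_team_equiv \<Delta> H q' q''"
      unfolding restr_team_equiv_def team_equiv_def S_def .
  qed
qed

end
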